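(* The graded graph $(\mathbf{S}_\bullet(\mathfrak{G}), \mathbf{U})$ is $\phi$-diagonal self-dual (i.e. $\mathbf{U}^\star\mathbf{U} - \mathbf{U}\mathbf{U}^\star = \phi$ for some diagonal linear map $\phi$) if and only if $\mathfrak{G}$ is the empty alphabet or a singleton alphabet. When $\mathfrak{G}$ is a singleton, $\phi$ satisfies $\phi(\mathfrak{t}) = (|\mathfrak{t}| - \#\mathcal{N}^{\mathrm{m}}(\mathfrak{t}))\,\mathfrak{t}$ for any $\mathfrak{G}$-tree $\mathfrak{t}$.
   Context: $\mathfrak{G}$ is a finite alphabet (letters with arities $\geq 1$). A $\mathfrak{G}$-tree is either the leaf (the tree with no internal node) or a root decorated by a letter $\mathtt{a}\in\mathfrak{G}$ with $|\mathtt{a}|$ children that are $\mathfrak{G}$-trees. Its degree is its number of internal nodes and $|\mathfrak{t}|$ its number of leaves (ordered left to right). $\mathbf{S}_\bullet(\mathfrak{G})$ is the set of $\mathfrak{G}$-trees graded by degree. $\mathfrak{t}\circ_i\mathtt{a}$ replaces the $i$-th leaf of $\mathfrak{t}$ by an internal node decorated by $\mathtt{a}$ with only leaves as children. $\mathbf{U}(\mathfrak{t}) = \sum_{\mathtt{a}\in\mathfrak{G},\, i\in[|\mathfrak{t}|]} \mathfrak{t}\circ_i\mathtt{a}$, and $\mathbf{U}^\star$ is its adjoint for the scalar product making trees orthonormal. A diagonal linear map sends each tree $\mathfrak{t}$ to $\lambda_\mathfrak{t}\mathfrak{t}$. An internal node is maximal if all its children are leaves, and $\mathcal{N}^{\mathrm{m}}(\mathfrak{t})$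 is the set of maximal internal nodes of $\mathfrak{t}$. *)

theory Defs
  imports Main
begin

datatype 'a tree = Leaf | Node 'a "'a tree list"

inductive gtree :: "'a set \<Rightarrow> ('a \<Rightarrow> nat) \<Rightarrow> 'a tree \<Rightarrow> bool" for G ar where
  gtree_Leaf: "gtree G ar Leaf"
| gtree_Node: "\<lbrakk> a \<in> G; length ts = ar a; \<forall>t\<in>set ts. gtree G ar t \<rbrakk> \<Longrightarrow> gtree G ar (Node a ts)"

fun leaves :: "'a tree \<Rightarrow> nat" where
  "leaves Leaf = 1"
| "leaves (Node a ts) = sum_list (map leaves ts)"

fun degree :: "'a tree \<Rightarrow> nat" where
  "degree Leaf = 0"
| "degree (Node a ts) = Suc (sum_list (map degree ts))"

fun nmax :: "'a tree \<Rightarrow> nat" where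
  "nmax Leaf = 0"
| "nmax (Node a ts) = (if \<forall>t\<in>set ts. t = Leaf then 1 else sum_list (map nmax ts))"

text \<open>graft ar t i a = t \<circ>_(i+1) a : replace the leaf of index i (0-based, left to right)
  by a node labelled a with ar a leaf children.\<close>
fun graft :: "('a \<Rightarrow> nat) \<Rightarrow> 'a tree \<Rightarrow> nat \<Rightarrow> 'a \<Rightarrow> 'a tree"
and graftl :: "('a \<Rightarrow> nat) \<Rightarrow> 'a tree list \<Rightarrow> nat \<Rightarrow> 'a \<Rightarrow> 'a tree list" where
  "graft ar Leaf i a = (if i = 0 then Node a (replicate (ar a) Leaf) else Leaf)"
| "graft ar (Node b ts) i a = Node b (graftl ar ts i a)"
| "graftl ar [] i a = []"
| "graftl ar (t # ts) i a =
     (if i < leaves t then graft ar t i a # ts else t # graftl ar ts (i - leaves t) a)"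

text \<open>Matrix coefficient of U: coefficient of s in U(t) = \<Sum>_{a\<in>G, i} t \<circ>_i a.\<close>
definition Ucoef :: "'a set \<Rightarrow> ('a \<Rightarrow> nat) \<Rightarrow> 'a tree \<Rightarrow> 'a tree \<Rightarrow> int" where
  "Ucoef G ar s t = int (card {(a, i). a \<in> G \<and> i < leaves t \<and> graft ar t i a = s})"

text \<open>Coefficient of t' in (U* U - U U*)(t), where U* is the adjoint of U for the scalar
  product making trees orthonormal, so that U*(s) = \<Sum>_r Ucoef s r \<cdot> r.\<close>
definition commcoef :: "'a set \<Rightarrow> ('a \<Rightarrow> nat) \<Rightarrow> 'a tree \<Rightarrow> 'a tree \<Rightarrow> int" where
  "commcoef G ar t' t =
     (\<Sum>s\<in>{s. Ucoef G ar s t \<noteq> 0}. Ucoef G ar s t * Ucoef G ar s t')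
   - (\<Sum>r\<in>{r. gtree G ar r \<and> Ucoef G ar t r \<noteq> 0}. Ucoef G ar t r * Ucoef G ar t' r)"

text \<open>(S(G), U) is phi-diagonal self-dual: U*U - UU* = phi with phi diagonal,
  phi(t) = lambda_t t, given by its eigenvalue function.\<close>
definition diag_self_dual :: "'a set \<Rightarrow> ('a \<Rightarrow> nat) \<Rightarrow> ('a tree \<Rightarrow> int) \<Rightarrow> bool" where
  "diag_self_dual G ar \<phi> \<longleftrightarrow>
     (\<forall>t t'. gtree G ar t \<longrightarrow> gtree G ar t' \<longrightarrow>
        commcoef G ar t' t = (if t' = t then \<phi> t else 0))"

end

theory Submission
  imports Defs
begin

fun inP :: "'a tree \<Rightarrow> nat list \<Rightarrow> bool" where
  "inP Leaf p = False"
| "inP (Node b ts) [] = True"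
| "inP (Node b ts) (c # p) = (if c < length ts then inP (ts ! c) p else False)"

definition paths :: "'a tree \<Rightarrow> nat list set" where
  "paths t = {p. inP t p}"

lemma paths_Leaf[simp]: "paths Leaf = {}"
  by (simp add: paths_def)

lemma Nil_paths_Node[simp]: "[] \<in> paths (Node b ts)"
  by (simp add: paths_def)

lemma Cons_paths_Node[simp]: "c # p \<in> paths (Node b ts) \<longleftrightarrow> c < length ts \<and> p \<in> paths (ts ! c)"
  by (simp add: paths_def)

lemma paths_Node: "paths (Node b ts) = insert [] (\<Union>c<length ts. Cons c ` paths (ts ! c))"
proof (rule set_eqI)
  fix p show "p \<in> paths (Node b ts) \<longleftrightarrow> p \<in> insert [] (\<Union>c<length ts. Cons c ` paths (ts ! c))"
    by (cases p) auto
qed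

lemma finite_paths: "finite (paths t)"
proof (induction t)
  case Leaf then show ?case by simp
next
  case (Node b ts)
  then show ?case unfolding paths_Node by (auto intro!: finite_imageI)
qed

lemma Nil_notin_paths: "[] \<notin> paths t \<Longrightarrow> t = Leaf"
  by (cases t) auto

definition valid :: "nat \<Rightarrow> nat list set \<Rightarrow> bool" where
  "valid k P \<longleftrightarrow> finite P \<and> (\<forall>p q. p @ q \<in> P \<longrightarrow> p \<in> P) \<and> (\<forall>p c. p @ [c] \<in> P \<longrightarrow> c < k)"

definition Lf :: "nat \<Rightarrow> nat list set \<Rightarrow> nat list set" where
  "Lf k P = {l. l \<notin> P \<and> ((l = [] \<and> P = {}) \<or> (\<exists>q c. l = q @ [c] \<and> q \<in> P \<and> c < k))}"

definition Mx :: "nat \<Rightarrow> nat list set \<Rightarrow> nat list set" where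
  "Mx k P = {m \<in> P. \<forall>c<k. m @ [c] \<notin> P}"

context
  fixes a :: 'a and ar :: "'a \<Rightarrow> nat"
begin

lemma gtree_valid: "gtree {a} ar t \<Longrightarrow> valid (ar a) (paths t)"
proof (induction t rule: gtree.induct)
  case gtree_Leaf
  then show ?case by (simp add: valid_def)
next
  case (gtree_Node b ts)
  have b: "b = a" using gtree_Node by simp
  have pre: "p \<in> paths (Node b ts)" if "p @ q \<in> paths (Node b ts)" for p q
  proof (cases p)
    case Nil then show ?thesis by simp
  next
    case (Cons c p')
    then have "c < length ts" "p' @ q \<in> paths (ts ! c)" using that by auto
    moreover have "valid (ar a) (paths (ts ! c))" using gtree_Node(3) \<open>c < length ts\<close> by auto
    ultimately show ?thesis using Cons by (auto simp: valid_def)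
  qed
  have ch: "c < ar a" if "p @ [c] \<in> paths (Node b ts)" for p c
  proof (cases p)
    case Nil then show ?thesis using that gtree_Node b by auto
  next
    case (Cons d p')
    then have "d < length ts" "p' @ [c] \<in> paths (ts ! d)" using that by auto
    moreover have "valid (ar a) (paths (ts ! d))" using gtree_Node(3) \<open>d < length ts\<close> by auto
    ultimately show ?thesis by (auto simp: valid_def)
  qed
  show ?case using pre ch finite_paths unfolding valid_def by blast
qed

lemma paths_inj: "gtree {a} ar t \<Longrightarrow> gtree {a} ar t' \<Longrightarrow> paths t = paths t' \<Longrightarrow> t = t'"
proof (induction t arbitrary: t' rule: gtree.induct)
  case gtree_Leaf
  then show ?case using Nil_notin_paths by (metis empty_iff paths_Leaf)
next
  case (gtree_Node b ts)
  have "[] \<in> paths t'" using gtree_Node(5) by (metis Nil_paths_Node)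
  then obtain b' ts' where t': "t' = Node b' ts'" by (cases t') auto
  have b': "b' = a" "length ts' = ar a" using gtree_Node(4) t' by (auto elim: gtree.cases)
  have "ts ! c = ts' ! c" if "c < length ts" for c
  proof -
    have "paths (ts ! c) = paths (ts' ! c)"
    proof (rule set_eqI)
      fix p
      have "c # p \<in> paths (Node b ts) \<longleftrightarrow> c # p \<in> paths t'" using gtree_Node(5) by simp
      then show "p \<in> paths (ts ! c) \<longleftrightarrow> p \<in> paths (ts' ! c)"
        using that gtree_Node(1,2) b'(2) t' by simp
    qed
    moreover have "gtree {a} ar (ts' ! c)"
    proof -
      have "\<forall>u\<in>set ts'. gtree {a} ar u" using gtree_Node(4) t' by (auto elim: gtree.cases)
      moreover have "c < length ts'" using that gtree_Node(1,2) b'(2) by simp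
      ultimately show ?thesis by simp
    qed
    ultimately show ?thesis using gtree_Node(3) that by auto
  qed
  then have "ts = ts'" using gtree_Node(1,2) b'(2) by (simp add: nth_equalityI)
  then show ?case using t' b' gtree_Node(1) by simp
qed

end

lemma valid_Nil: "valid k P \<Longrightarrow> P \<noteq> {} \<Longrightarrow> [] \<in> P"
  unfolding valid_def by (metis append_Nil ex_in_conv)

context
  fixes a :: 'a and ar :: "'a \<Rightarrow> nat"
begin

lemma exists_tree: "valid (ar a) P \<Longrightarrow> \<exists>t. gtree {a} ar t \<and> paths t = P"
proof (induction "card P" arbitrary: P rule: less_induct)
  case less
  show ?case
  proof (cases "P = {}")
    case True
    then show ?thesis by (intro exI[of _ Leaf]) (auto intro: gtree.intros)
  next
    case False
    have nil: "[] \<in> P" using valid_Nil less.prems False by blast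
    define Pc where "Pc c = {p. c # p \<in> P}" for c
    have fin: "finite P" using less.prems by (simp add: valid_def)
    have vc: "valid (ar a) (Pc c)" for c
    proof -
      have "finite (Pc c)" unfolding Pc_def
        using finite_vimageI[OF fin, of "Cons c"] by (simp add: vimage_def)
      moreover have "p \<in> Pc c" if "p @ q \<in> Pc c" for p q
        using that less.prems unfolding Pc_def valid_def by (metis Cons_eq_appendI mem_Collect_eq)
      moreover have "d < ar a" if "p @ [d] \<in> Pc c" for p d
        using that less.prems unfolding Pc_def valid_def by (metis Cons_eq_appendI mem_Collect_eq)
      ultimately show ?thesis unfolding valid_def by blast
    qed
    have cc: "card (Pc c) < card P" for c
    proof -
      have "Cons c ` Pc c \<subseteq> P - {[]}" unfolding Pc_def by auto
      then have "card (Cons c ` Pc c) \<le> card (P - {[]})" using fin by (intro card_mono) auto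
      moreover have "card (Cons c ` Pc c) = card (Pc c)" by (simp add: card_image)
      moreover have "card (P - {[]}) < card P" using fin nil by (metis card_Diff1_less)
      ultimately show ?thesis by simp
    qed
    have "\<forall>c\<in>{..<ar a}. \<exists>t. gtree {a} ar t \<and> paths t = Pc c"
      using less.hyps[OF cc vc] by blast
    then obtain f where f: "\<And>c. c < ar a \<Longrightarrow> gtree {a} ar (f c) \<and> paths (f c) = Pc c"
      by (metis bchoice lessThan_iff)
    define t where "t = Node a (map f [0..<ar a])"
    have "gtree {a} ar t" unfolding t_def using f by (auto intro!: gtree.intros)
    moreover have "paths t = P"
    proof (rule set_eqI)
      fix p show "p \<in> paths t \<longleftrightarrow> p \<in> P"
      proof (cases p)
        case Nil then show ?thesis using nil t_def by simp
      next
        case (Cons c p')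
        have "c < ar a" if "c # p' \<in> P"
        proof -
          have "[c] \<in> P" using that less.prems unfolding valid_def by (metis append_Cons append_Nil)
          then show ?thesis using less.prems unfolding valid_def by (metis append_Nil)
        qed
        then show ?thesis using Cons f unfolding t_def Pc_def by auto
      qed
    qed
    ultimately show ?thesis by blast
  qed
qed

end

lemma graftl_split: "i < sum_list (map leaves ts) \<Longrightarrow>
  \<exists>c i'. c < length ts \<and> i' < leaves (ts ! c) \<and> graftl ar ts i a = ts[c := graft ar (ts ! c) i' a]"
proof (induction ts arbitrary: i)
  case Nil then show ?case by simp
next
  case (Cons t ts)
  show ?case
  proof (cases "i < leaves t")
    case True
    then show ?thesis by (intro exI[of _ 0] exI[of _ i]) simp
  next
    case False
    then obtain c i' where "c < length ts" "i' < leaves (ts ! c)"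
      "graftl ar ts (i - leaves t) a = ts[c := graft ar (ts ! c) i' a]"
    proof -
      have "i - leaves t < sum_list (map leaves ts)" using Cons.prems False by simp
      then show ?thesis using Cons.IH that by blast
    qed
    then show ?thesis using False by (intro exI[of _ "Suc c"] exI[of _ i']) simp
  qed
qed

lemma graftl_index: "c < length ts \<Longrightarrow> i' < leaves (ts ! c) \<Longrightarrow>
  graftl ar ts (sum_list (map leaves (take c ts)) + i') a = ts[c := graft ar (ts ! c) i' a]
  \<and> sum_list (map leaves (take c ts)) + i' < sum_list (map leaves ts)"
proof (induction ts arbitrary: c)
  case Nil then show ?case by simp
next
  case (Cons t ts)
  show ?case
  proof (cases c)
    case 0 then show ?thesis using Cons by simp
  next
    case (Suc c')
    then show ?thesis using Cons.IH[of c'] Cons.prems by simp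
  qed
qed

lemma paths_update: "c < length ts \<Longrightarrow> paths u = insert l (paths (ts ! c)) \<Longrightarrow>
   paths (Node b (ts[c := u])) = insert (c # l) (paths (Node b ts))"
proof (rule set_eqI)
  fix p assume "c < length ts" "paths u = insert l (paths (ts ! c))"
  then show "p \<in> paths (Node b (ts[c := u])) \<longleftrightarrow> p \<in> insert (c # l) (paths (Node b ts))"
    by (cases p) (auto simp: nth_list_update)
qed

lemma Lf_Leaf: "Lf k {} = {[]}"
  by (auto simp: Lf_def)

lemma Lf_Node_intro: "c < length ts \<Longrightarrow> length ts = k \<Longrightarrow> l \<in> Lf k (paths (ts ! c)) \<Longrightarrow>
   c # l \<in> Lf k (paths (Node b ts))"
  unfolding Lf_def
  by auto

lemma Lf_Node_dest: "l \<in> Lf k (paths (Node b ts)) \<Longrightarrow> length ts = k \<Longrightarrow>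
   \<exists>c l'. l = c # l' \<and> c < length ts \<and> l' \<in> Lf k (paths (ts ! c))"
proof -
  assume l: "l \<in> Lf k (paths (Node b ts))" and k: "length ts = k"
  then obtain q d where qd: "l = q @ [d]" "q \<in> paths (Node b ts)" "d < k" "l \<notin> paths (Node b ts)"
    unfolding Lf_def by auto
  show ?thesis
  proof (cases q)
    case Nil
    then have "[] \<notin> paths (ts ! d)" using qd k by auto
    then have "paths (ts ! d) = {}" using Nil_notin_paths by fastforce
    then show ?thesis using qd Nil k by (auto simp: Lf_def)
  next
    case (Cons c q')
    then show ?thesis using qd k by (auto simp: Lf_def)
  qed
qed

lemma Lf_Node: "length ts = k \<Longrightarrow> Lf k (paths (Node b ts)) = (\<Union>c<length ts. Cons c ` Lf k (paths (ts ! c)))"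
proof (rule set_eqI)
  fix l assume k: "length ts = k"
  show "l \<in> Lf k (paths (Node b ts)) \<longleftrightarrow> l \<in> (\<Union>c<length ts. Cons c ` Lf k (paths (ts ! c)))"
  proof
    assume "l \<in> Lf k (paths (Node b ts))"
    then obtain c l' where "l = c # l'" "c < length ts" "l' \<in> Lf k (paths (ts ! c))"
      using Lf_Node_dest[OF _ k] by blast
    then show "l \<in> (\<Union>c<length ts. Cons c ` Lf k (paths (ts ! c)))" by blast
  next
    assume "l \<in> (\<Union>c<length ts. Cons c ` Lf k (paths (ts ! c)))"
    then obtain c l' where "l = c # l'" "c < length ts" "l' \<in> Lf k (paths (ts ! c))" by blast
    then show "l \<in> Lf k (paths (Node b ts))" using Lf_Node_intro[OF _ k] by blast
  qed
qed

lemma card_Lf: "card (Lf (ar a) (paths t)) = leaves t" if "gtree {a} ar t" for a ar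
  using that
proof (induction t rule: gtree.induct)
  case gtree_Leaf then show ?case by (simp add: Lf_Leaf)
next
  case (gtree_Node b ts)
  have fin: "finite (Lf k P)" if "finite P" for k P
  proof -
    have "Lf k P \<subseteq> {[]} \<union> (\<lambda>(q, c). q @ [c]) ` (P \<times> {..<k})" unfolding Lf_def by auto
    moreover have "finite ({[]} \<union> (\<lambda>(q, c). q @ [c]) ` (P \<times> {..<k}))" using that by simp
    ultimately show ?thesis by (rule finite_subset)
  qed
  have "card (Lf (ar a) (paths (Node b ts))) = (\<Sum>c<length ts. card (Cons c ` Lf (ar a) (paths (ts ! c))))"
    unfolding Lf_Node[OF gtree_Node(2)[unfolded singleton_iff[THEN iffD1, OF gtree_Node(1)]]]
    using gtree_Node(1)
    by (intro card_UN_disjoint) (auto intro!: finite_imageI fin finite_paths)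
  also have "\<dots> = (\<Sum>c<length ts. leaves (ts ! c))"
    using gtree_Node(3) by (auto simp: card_image intro!: sum.cong)
  also have "\<dots> = leaves (Node b ts)" by (simp add: sum_list_sum_nth atLeast0LessThan)
  finally show ?case .
qed

lemma Mx_Node: "Mx k (paths (Node b ts)) = (if \<forall>t\<in>set ts. t = Leaf then {[]} else {}) \<union>
    (\<Union>c<length ts. Cons c ` Mx k (paths (ts ! c)))" if "length ts = k"
proof (rule set_eqI)
  fix p
  show "p \<in> Mx k (paths (Node b ts)) \<longleftrightarrow> p \<in> (if \<forall>t\<in>set ts. t = Leaf then {[]} else {}) \<union>
    (\<Union>c<length ts. Cons c ` Mx k (paths (ts ! c)))"
  proof (cases p)
    case Nil
    have "(\<forall>c<k. [c] \<notin> paths (Node b ts)) \<longleftrightarrow> (\<forall>t\<in>set ts. t = Leaf)"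
      using that by (auto simp: in_set_conv_nth) (metis Nil_notin_paths nth_mem paths_Leaf empty_iff)+
    then show ?thesis using Nil by (auto simp: Mx_def)
  next
    case (Cons c q)
    then show ?thesis by (auto simp: Mx_def)
  qed
qed

lemma card_Mx: "card (Mx (ar a) (paths t)) = nmax t" if "gtree {a} ar t" for a ar
  using that
proof (induction t rule: gtree.induct)
  case gtree_Leaf then show ?case by (simp add: Mx_def)
next
  case (gtree_Node b ts)
  have k: "length ts = ar a" using gtree_Node(1,2) by simp
  have finM: "finite (Mx k P)" if "finite P" for k P using that by (simp add: Mx_def)
  show ?case
  proof (cases "\<forall>t\<in>set ts. t = Leaf")
    case True
    then have "Mx (ar a) (paths (ts ! c)) = {}" if "c < length ts" for c
    proof -
      have "ts ! c = Leaf" using True that nth_mem by blast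
      then show ?thesis by (simp add: Mx_def)
    qed
    then show ?thesis unfolding Mx_Node[OF k] using True by simp
  next
    case False
    have "card (Mx (ar a) (paths (Node b ts))) = (\<Sum>c<length ts. card (Cons c ` Mx (ar a) (paths (ts ! c))))"
      unfolding Mx_Node[OF k] using False
      by (simp only: if_False Un_empty_left) (intro card_UN_disjoint, auto intro!: finite_imageI finM finite_paths)
    also have "\<dots> = (\<Sum>c<length ts. nmax (ts ! c))"
      using gtree_Node(3) by (auto simp: card_image intro!: sum.cong)
    also have "\<dots> = sum_list (map nmax ts)" by (simp add: sum_list_sum_nth atLeast0LessThan)
    also have "\<dots> = nmax (Node b ts)" by (simp only: nmax.simps if_not_P[OF False])
    finally show ?thesis .
  qed
qed

context
  fixes a :: 'a and ar :: "'a \<Rightarrow> nat"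
begin

lemma graft_up: "gtree {a} ar t \<Longrightarrow> i < leaves t \<Longrightarrow> gtree {a} ar (graft ar t i a) \<and>
   (\<exists>l\<in>Lf (ar a) (paths t). paths (graft ar t i a) = insert l (paths t))"
proof (induction t arbitrary: i rule: gtree.induct)
  case gtree_Leaf
  then have "paths (graft ar Leaf i a) = {[]}" by (simp add: paths_Node)
  moreover have "gtree {a} ar (graft ar Leaf i a)" using gtree_Leaf by (auto intro!: gtree.intros)
  ultimately show ?case by (simp add: Lf_Leaf)
next
  case (gtree_Node b ts)
  have b: "b = a" using gtree_Node(1) by simp
  obtain c i' where ci: "c < length ts" "i' < leaves (ts ! c)"
    "graftl ar ts i a = ts[c := graft ar (ts ! c) i' a]"
    using graftl_split[of i ts ar a] gtree_Node(4) by auto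
  define u where "u = graft ar (ts ! c) i' a"
  have IH: "gtree {a} ar u \<and> (\<exists>l\<in>Lf (ar a) (paths (ts ! c)). paths u = insert l (paths (ts ! c)))"
    using gtree_Node(3) ci unfolding u_def by auto
  then obtain l where l: "l \<in> Lf (ar a) (paths (ts ! c))" "paths u = insert l (paths (ts ! c))" by blast
  have g: "graft ar (Node b ts) i a = Node b (ts[c := u])" using ci u_def by simp
  have "gtree {a} ar (Node b (ts[c := u]))"
    using gtree_Node(1,2,3) IH ci(1) by (intro gtree.intros) (auto dest: set_update_subset_insert[THEN subsetD])
  moreover have "paths (Node b (ts[c := u])) = insert (c # l) (paths (Node b ts))"
    using paths_update[OF ci(1) l(2)] .
  moreover have "c # l \<in> Lf (ar a) (paths (Node b ts))"
    using Lf_Node_intro[OF ci(1) _ l(1)] gtree_Node(2) b by simp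
  ultimately show ?case using g by metis
qed

lemma graft_onto: "gtree {a} ar t \<Longrightarrow> l \<in> Lf (ar a) (paths t) \<Longrightarrow>
   \<exists>i<leaves t. paths (graft ar t i a) = insert l (paths t)"
proof (induction t arbitrary: l rule: gtree.induct)
  case gtree_Leaf
  then have "l = []" by (simp add: Lf_Leaf)
  moreover have "paths (graft ar Leaf 0 a) = {[]}" by (simp add: paths_Node)
  ultimately show ?case by (intro exI[of _ 0]) simp
next
  case (gtree_Node b ts)
  have b: "b = a" using gtree_Node(1) by simp
  obtain c l' where cl: "l = c # l'" "c < length ts" "l' \<in> Lf (ar a) (paths (ts ! c))"
    using Lf_Node_dest[OF gtree_Node(4)] gtree_Node(2) b by auto
  obtain i' where i': "i' < leaves (ts ! c)" "paths (graft ar (ts ! c) i' a) = insert l' (paths (ts ! c))"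
  proof -
    have "ts ! c \<in> set ts" using cl(2) by simp
    then have "\<And>l. l \<in> Lf (ar a) (paths (ts ! c)) \<Longrightarrow> \<exists>i<leaves (ts ! c). paths (graft ar (ts ! c) i a) = insert l (paths (ts ! c))"
      using gtree_Node(3) by blast
    then show ?thesis using cl(3) that by blast
  qed
  define i where "i = sum_list (map leaves (take c ts)) + i'"
  have gi: "graftl ar ts i a = ts[c := graft ar (ts ! c) i' a]" "i < leaves (Node b ts)"
    using graftl_index[OF cl(2) i'(1), of ar a] unfolding i_def by auto
  have "paths (graft ar (Node b ts) i a) = insert l (paths (Node b ts))"
    unfolding graft.simps gi(1) cl(1) by (rule paths_update[OF cl(2) i'(2)])
  then show ?case using gi(2) by blast
qed

definition Up :: "'a tree \<Rightarrow> 'a tree set" where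
  "Up t = (\<lambda>i. graft ar t i a) ` {..<leaves t}"

definition Dn :: "'a tree \<Rightarrow> 'a tree set" where
  "Dn t = {r. gtree {a} ar r \<and> t \<in> Up r}"

lemma Up_gtree: "gtree {a} ar t \<Longrightarrow> s \<in> Up t \<Longrightarrow> gtree {a} ar s"
  unfolding Up_def using graft_up by auto

lemma paths_Up: "gtree {a} ar t \<Longrightarrow> paths ` Up t = (\<lambda>l. insert l (paths t)) ` Lf (ar a) (paths t)"
proof
  assume "gtree {a} ar t"
  then show "paths ` Up t \<subseteq> (\<lambda>l. insert l (paths t)) ` Lf (ar a) (paths t)"
    unfolding Up_def using graft_up by fastforce
next
  assume "gtree {a} ar t"
  then show "(\<lambda>l. insert l (paths t)) ` Lf (ar a) (paths t) \<subseteq> paths ` Up t"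
    unfolding Up_def using graft_onto by fastforce
qed

lemma inj_paths: "inj_on paths {t. gtree {a} ar t}"
  by (rule inj_onI) (simp add: paths_inj)

lemma card_Up: "gtree {a} ar t \<Longrightarrow> card (Up t) = leaves t"
proof -
  assume g: "gtree {a} ar t"
  have "card (Up t) = card (paths ` Up t)"
    using inj_paths Up_gtree[OF g] by (intro card_image[symmetric]) (auto intro: inj_on_subset)
  also have "\<dots> = card ((\<lambda>l. insert l (paths t)) ` Lf (ar a) (paths t))" using paths_Up[OF g] by simp
  also have "\<dots> = card (Lf (ar a) (paths t))"
  proof (intro card_image inj_onI)
    fix l l' assume "l \<in> Lf (ar a) (paths t)" "l' \<in> Lf (ar a) (paths t)"
      "insert l (paths t) = insert l' (paths t)"
    then show "l = l'" unfolding Lf_def by blast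
  qed
  also have "\<dots> = leaves t" using card_Lf[OF g] .
  finally show ?thesis .
qed

lemma inj_graft: "gtree {a} ar t \<Longrightarrow> inj_on (\<lambda>i. graft ar t i a) {..<leaves t}"
  using card_Up by (intro eq_card_imp_inj_on) (auto simp: Up_def)

end

definition UpS :: "nat \<Rightarrow> nat list set \<Rightarrow> nat list set set" where
  "UpS k P = (\<lambda>l. insert l P) ` Lf k P"

definition DnS :: "nat \<Rightarrow> nat list set \<Rightarrow> nat list set set" where
  "DnS k P = {Q. valid k Q \<and> P \<in> UpS k Q}"

lemma DnS_Mx: "valid k P \<Longrightarrow> DnS k P = (\<lambda>m. P - {m}) ` Mx k P"
proof
  assume v: "valid k P"
  show "DnS k P \<subseteq> (\<lambda>m. P - {m}) ` Mx k P"
  proof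
    fix Q assume "Q \<in> DnS k P"
    then obtain l where Q: "valid k Q" "l \<in> Lf k Q" "P = insert l Q" unfolding DnS_def UpS_def by auto
    have lQ: "l \<notin> Q" using Q(2) by (simp add: Lf_def)
    have "l \<in> Mx k P"
    proof -
      have "l @ [c] \<notin> P" for c
      proof
        assume "l @ [c] \<in> P"
        then have "l @ [c] \<in> Q" using Q(3) by auto
        then have "l \<in> Q" using Q(1) unfolding valid_def by blast
        then show False using lQ by simp
      qed
      then show ?thesis using Q(3) by (simp add: Mx_def)
    qed
    moreover have "Q = P - {l}" using Q(3) lQ by auto
    ultimately show "Q \<in> (\<lambda>m. P - {m}) ` Mx k P" by blast
  qed
next
  assume v: "valid k P"
  show "(\<lambda>m. P - {m}) ` Mx k P \<subseteq> DnS k P"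
  proof
    fix Q assume "Q \<in> (\<lambda>m. P - {m}) ` Mx k P"
    then obtain m where m: "m \<in> Mx k P" "Q = P - {m}" by blast
    have mP: "m \<in> P" and mx: "\<And>c. c < k \<Longrightarrow> m @ [c] \<notin> P" using m(1) by (auto simp: Mx_def)
    have pre: "p \<in> Q" if "p @ q \<in> Q" for p q
    proof -
      have "p \<in> P" using that m(2) v unfolding valid_def by blast
      moreover have "p \<noteq> m"
      proof
        assume pm: "p = m"
        have "q \<noteq> []" using that m(2) pm by auto
        then obtain c q' where "q = c # q'" by (cases q) auto
        then have "(m @ [c]) @ q' \<in> P" using that m(2) pm by simp
        then have "m @ [c] \<in> P" using v unfolding valid_def by blast
        moreover then have "c < k" using v unfolding valid_def by blast
        ultimately show False using mx by blast
      qed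
      ultimately show ?thesis using m(2) by simp
    qed
    have vQ: "valid k Q"
    proof -
      have "finite Q" using v m(2) unfolding valid_def by simp
      moreover have "\<forall>p c. p @ [c] \<in> Q \<longrightarrow> c < k" using v m(2) unfolding valid_def by blast
      ultimately show ?thesis using pre unfolding valid_def by blast
    qed
    have "m \<in> Lf k Q"
    proof (cases m rule: rev_cases)
      case Nil
      have "Q = {}"
      proof (rule ccontr)
        assume "Q \<noteq> {}"
        then obtain p where "p \<in> Q" by blast
        moreover have "p \<noteq> []" using \<open>p \<in> Q\<close> m(2) Nil by blast
        ultimately obtain c p' where "([] @ [c]) @ p' \<in> Q" by (metis append_Cons append_Nil list.exhaust)
        then have "[] @ [c] \<in> Q" using vQ unfolding valid_def by blast
        then have "[] @ [c] \<in> P" using m(2) by blast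
        moreover then have "c < k" using v unfolding valid_def by blast
        ultimately have "[c] \<in> P" "c < k" by simp_all
        then show False using mx Nil by simp
      qed
      moreover have "m \<notin> Q" using m(2) by blast
      ultimately show ?thesis using Nil unfolding Lf_def by blast
    next
      case (snoc q c)
      have "q \<in> P" using v snoc mP unfolding valid_def by blast
      then have "q \<in> Q" using snoc m(2) by simp
      moreover have "c < k" using v snoc mP unfolding valid_def by blast
      moreover have "m \<notin> Q" using m(2) by blast
      ultimately show ?thesis using snoc unfolding Lf_def by blast
    qed
    moreover have "P = insert m Q" using m(2) mP by auto
    ultimately show "Q \<in> DnS k P" using vQ unfolding DnS_def UpS_def by blast
  qed
qed

lemma card_DnS: "valid k P \<Longrightarrow> card (DnS k P) = card (Mx k P)"
  unfolding DnS_Mx by (rule card_image) (auto intro!: inj_onI simp: Mx_def)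

lemma card_UpS: "card (UpS k P) = card (Lf k P)"
  unfolding UpS_def
proof (intro card_image inj_onI)
  fix l l' assume "l \<in> Lf k P" "l' \<in> Lf k P" "insert l P = insert l' P"
  then show "l = l'" unfolding Lf_def by blast
qed

lemma finite_DnS: "valid k P \<Longrightarrow> finite (DnS k P)"
  unfolding DnS_Mx by (auto simp: valid_def Mx_def)

lemma UpS_Int: "valid k P \<Longrightarrow> valid k P' \<Longrightarrow> P \<noteq> P' \<Longrightarrow> UpS k P \<inter> UpS k P' \<subseteq> {P \<union> P'}"
proof
  fix X assume "valid k P" "valid k P'" "P \<noteq> P'" "X \<in> UpS k P \<inter> UpS k P'"
  then obtain l l' where X: "X = insert l P" "l \<notin> P" "X = insert l' P'" "l' \<notin> P'" "P \<noteq> P'"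
    unfolding UpS_def Lf_def by blast
  then have "l \<noteq> l'" by (metis Diff_insert_absorb)
  then have "X = P \<union> P'" using X by blast
  then show "X \<in> {P \<union> P'}" by simp
qed

lemma DnS_Int: "valid k P \<Longrightarrow> valid k P' \<Longrightarrow> P \<noteq> P' \<Longrightarrow> DnS k P \<inter> DnS k P' \<subseteq> {P \<inter> P'}"
proof
  fix Q assume "valid k P" "valid k P'" "P \<noteq> P'" "Q \<in> DnS k P \<inter> DnS k P'"
  then obtain l l' where X: "P = insert l Q" "l \<notin> Q" "P' = insert l' Q" "l' \<notin> Q" "P \<noteq> P'"
    unfolding DnS_def UpS_def Lf_def by blast
  then have "l \<noteq> l'" by blast
  then have "Q = P \<inter> P'" using X by blast
  then show "Q \<in> {P \<inter> P'}" by simp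
qed

lemma valid_prefix: "valid k P \<Longrightarrow> p @ q \<in> P \<Longrightarrow> p \<in> P"
  unfolding valid_def by blast

lemma Lf_snocI: "l \<notin> P \<Longrightarrow> l = q @ [c] \<Longrightarrow> q \<in> P \<Longrightarrow> c < k \<Longrightarrow> l \<in> Lf k P"
  unfolding Lf_def by blast

lemma up_to_dn_aux:
  assumes v: "valid k P" "valid k P'" and X: "insert l P = insert l' P'" and l: "l \<in> Lf k P" "l' \<in> Lf k P'"
    and ne: "P \<noteq> P'"
  shows "l' \<in> Lf k (P \<inter> P') \<and> P = insert l' (P \<inter> P')"
proof -
  have lnP: "l \<notin> P" "l' \<notin> P'" using l unfolding Lf_def by blast+
  have ll: "l \<noteq> l'" using X lnP ne by (metis Diff_insert_absorb)
  have "l' \<in> insert l P" using X by simp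
  then have l'P: "l' \<in> P" using ll by simp
  have l'nP': "l' \<notin> P'" using lnP by blast
  have eq: "P = insert l' (P \<inter> P')"
  proof
    show "P \<subseteq> insert l' (P \<inter> P')"
    proof
      fix x assume "x \<in> P"
      then have "x \<in> insert l' P'" using X by blast
      then show "x \<in> insert l' (P \<inter> P')" using \<open>x \<in> P\<close> by blast
    qed
  qed (use l'P in blast)
  have "l' \<in> Lf k (P \<inter> P')"
  proof -
    from l(2) consider "l' = []" "P' = {}" | q c where "l' = q @ [c]" "q \<in> P'" "c < k"
      unfolding Lf_def by blast
    then show ?thesis
    proof cases
      case 1
      then have "insert l P = {[]}" using X by simp
      then have "l = []" by blast
      then show ?thesis using ll 1 by simp
    next
      case 2
      then have "q \<in> P" using l'P valid_prefix[OF v(1)] by blast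
      then have "q \<in> P \<inter> P'" using 2 by blast
      moreover have "l' \<notin> P \<inter> P'" using l'nP' by blast
      ultimately show ?thesis using 2 Lf_snocI by metis
    qed
  qed
  then show ?thesis using eq by blast
qed

lemma dn_to_up_aux:
  assumes l: "l \<in> Lf k Q" "l' \<in> Lf k Q" and ll: "l \<noteq> l'"
  shows "l' \<in> Lf k (insert l Q)"
proof -
  from l(2) consider "l' = []" "Q = {}" | q c where "l' = q @ [c]" "q \<in> Q" "c < k"
    unfolding Lf_def by blast
  then show ?thesis
  proof cases
    case 1
    then have "l = []" using l(1) unfolding Lf_def by blast
    then show ?thesis using ll 1 by simp
  next
    case 2
    then show ?thesis using l ll unfolding Lf_def by blast
  qed
qed

lemma valid_Int: "valid k P \<Longrightarrow> valid k P' \<Longrightarrow> valid k (P \<inter> P')"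
  unfolding valid_def by auto

lemma card_Int_eq:
  assumes v: "valid k P" "valid k P'" and ne: "P \<noteq> P'"
  shows "card (UpS k P \<inter> UpS k P') = card (DnS k P \<inter> DnS k P')"
proof -
  have iff: "UpS k P \<inter> UpS k P' = {} \<longleftrightarrow> DnS k P \<inter> DnS k P' = {}"
  proof
    assume e: "DnS k P \<inter> DnS k P' = {}"
    show "UpS k P \<inter> UpS k P' = {}"
    proof (rule ccontr)
      assume "UpS k P \<inter> UpS k P' \<noteq> {}"
      then obtain Y where Y: "Y \<in> UpS k P" "Y \<in> UpS k P'" by blast
      obtain l where l: "l \<in> Lf k P" "Y = insert l P" using Y(1) unfolding UpS_def by (rule imageE)
      obtain l' where l': "l' \<in> Lf k P'" "Y = insert l' P'" using Y(2) unfolding UpS_def by (rule imageE)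
      have X: "insert l P = insert l' P'" using l(2) l'(2) by simp
      have A: "l' \<in> Lf k (P \<inter> P') \<and> P = insert l' (P \<inter> P')"
        using up_to_dn_aux[OF v X l(1) l'(1) ne] .
      have B: "l \<in> Lf k (P' \<inter> P) \<and> P' = insert l (P' \<inter> P)"
        using up_to_dn_aux[OF v(2,1) X[symmetric] l'(1) l(1) ne[symmetric]] .
      have "P \<inter> P' \<in> DnS k P"
        unfolding DnS_def UpS_def using A valid_Int[OF v] by (intro CollectI conjI) (auto intro: image_eqI)
      moreover have "P' \<inter> P \<in> DnS k P'"
        unfolding DnS_def UpS_def using B valid_Int[OF v(2,1)] by (intro CollectI conjI) (auto intro: image_eqI)
      moreover have "P' \<inter> P = P \<inter> P'" by (rule Int_commute)
      ultimately show False using e by auto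
    qed
  next
    assume e: "UpS k P \<inter> UpS k P' = {}"
    show "DnS k P \<inter> DnS k P' = {}"
    proof (rule ccontr)
      assume "DnS k P \<inter> DnS k P' \<noteq> {}"
      then obtain Q where Q0: "Q \<in> DnS k P" "Q \<in> DnS k P'" by blast
      have "P \<in> UpS k Q" "P' \<in> UpS k Q" using Q0 unfolding DnS_def by simp_all
      then obtain l l' where Q: "l \<in> Lf k Q" "P = insert l Q" "l' \<in> Lf k Q" "P' = insert l' Q"
        unfolding UpS_def by (meson imageE)
      have ll: "l \<noteq> l'"
      proof
        assume "l = l'"
        then have "P = P'" using Q(2,4) by simp
        then show False using ne by simp
      qed
      have "insert l' P \<in> UpS k P"
        unfolding UpS_def using dn_to_up_aux[OF Q(1,3) ll] Q(2) by (intro image_eqI) simp_all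
      moreover have "insert l P' \<in> UpS k P'"
        unfolding UpS_def using dn_to_up_aux[OF Q(3,1) ll[symmetric]] Q(4) by (intro image_eqI) simp_all
      moreover have "insert l' P = insert l P'" using Q(2,4) by (simp add: insert_commute)
      ultimately show False using e by auto
    qed
  qed
  have s1: "UpS k P \<inter> UpS k P' \<subseteq> {P \<union> P'}" using UpS_Int[OF v ne] .
  have s2: "DnS k P \<inter> DnS k P' \<subseteq> {P \<inter> P'}" using DnS_Int[OF v ne] .
  show ?thesis
  proof (cases "UpS k P \<inter> UpS k P' = {}")
    case True
    then show ?thesis using iff by simp
  next
    case False
    then have "UpS k P \<inter> UpS k P' = {P \<union> P'}" using s1 by (metis subset_singletonD)
    moreover have "DnS k P \<inter> DnS k P' = {P \<inter> P'}" using False iff s2 by (metis subset_singletonD)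
    ultimately show ?thesis by simp
  qed
qed

context
  fixes a :: 'a and ar :: "'a \<Rightarrow> nat"
begin

lemma Ucoef_single: "gtree {a} ar t \<Longrightarrow> Ucoef {a} ar s t = (if s \<in> Up a ar t then 1 else 0)"
proof -
  assume g: "gtree {a} ar t"
  have eq: "{(b, i). b \<in> {a} \<and> i < leaves t \<and> graft ar t i b = s} = Pair a ` {i. i < leaves t \<and> graft ar t i a = s}"
    by auto
  have c: "card {(b, i). b \<in> {a} \<and> i < leaves t \<and> graft ar t i b = s} = card {i. i < leaves t \<and> graft ar t i a = s}"
    unfolding eq by (rule card_image) (simp add: inj_on_def)
  show ?thesis
  proof (cases "s \<in> Up a ar t")
    case True
    then obtain i0 where i0: "i0 < leaves t" "s = graft ar t i0 a" unfolding Up_def by auto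
    have "{i. i < leaves t \<and> graft ar t i a = s} = {i0}"
      using i0 inj_graft[OF g] unfolding inj_on_def by auto
    then show ?thesis using True c unfolding Ucoef_def by simp
  next
    case False
    then have "{i. i < leaves t \<and> graft ar t i a = s} = {}" unfolding Up_def by auto
    then show ?thesis using False c unfolding Ucoef_def by simp
  qed
qed

lemma paths_Dn: "gtree {a} ar t \<Longrightarrow> paths ` Dn a ar t = DnS (ar a) (paths t)"
proof
  assume g: "gtree {a} ar t"
  show "paths ` Dn a ar t \<subseteq> DnS (ar a) (paths t)"
  proof
    fix Q assume "Q \<in> paths ` Dn a ar t"
    then obtain r where r: "gtree {a} ar r" "t \<in> Up a ar r" "Q = paths r" unfolding Dn_def by auto
    have "paths t \<in> UpS (ar a) (paths r)" using paths_Up[OF r(1)] r(2) unfolding UpS_def by blast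
    moreover have "valid (ar a) (paths r)" using gtree_valid[OF r(1)] .
    ultimately show "Q \<in> DnS (ar a) (paths t)" using r(3) unfolding DnS_def by simp
  qed
next
  assume g: "gtree {a} ar t"
  show "DnS (ar a) (paths t) \<subseteq> paths ` Dn a ar t"
  proof
    fix Q assume "Q \<in> DnS (ar a) (paths t)"
    then have Q: "valid (ar a) Q" "paths t \<in> UpS (ar a) Q" unfolding DnS_def by auto
    obtain r where r: "gtree {a} ar r" "paths r = Q" using exists_tree[where a=a and ar=ar and P=Q] Q(1) by blast
    have "paths t \<in> paths ` Up a ar r" using paths_Up[OF r(1)] Q(2) r(2) unfolding UpS_def by simp
    then obtain s where s: "s \<in> Up a ar r" "paths s = paths t" by auto
    have "s = t" using paths_inj[OF Up_gtree[OF r(1) s(1)] g s(2)] .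
    then have "r \<in> Dn a ar t" using r s unfolding Dn_def by simp
    then show "Q \<in> paths ` Dn a ar t" using r(2) by blast
  qed
qed

lemma Dn_gtree: "Dn a ar t \<subseteq> {t. gtree {a} ar t}"
  unfolding Dn_def by auto

lemma Up_sub: "gtree {a} ar t \<Longrightarrow> Up a ar t \<subseteq> {t. gtree {a} ar t}"
  using Up_gtree by auto

lemma finite_Dn: "gtree {a} ar t \<Longrightarrow> finite (Dn a ar t)"
proof -
  assume g: "gtree {a} ar t"
  have "finite (paths ` Dn a ar t)" using paths_Dn[OF g] finite_DnS[OF gtree_valid[OF g]] by simp
  then show ?thesis using inj_on_subset[OF inj_paths Dn_gtree] by (rule finite_imageD)
qed

lemma finite_Up: "finite (Up a ar t)"
  unfolding Up_def by simp

lemma sum_ind: "finite A \<Longrightarrow> (\<Sum>x\<in>A. (if x \<in> B then 1 else 0) :: int) = int (card (A \<inter> B))"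
  using sum.inter_restrict[of A "\<lambda>_. (1::int)" B] by simp

lemma commcoef_single:
  assumes g: "gtree {a} ar t" and g': "gtree {a} ar t'"
  shows "commcoef {a} ar t' t = int (card (Up a ar t \<inter> Up a ar t')) - int (card (Dn a ar t \<inter> Dn a ar t'))"
proof -
  have s1: "{s. Ucoef {a} ar s t \<noteq> 0} = Up a ar t" using Ucoef_single[OF g] by auto
  have "(\<Sum>s\<in>{s. Ucoef {a} ar s t \<noteq> 0}. Ucoef {a} ar s t * Ucoef {a} ar s t')
      = (\<Sum>s\<in>Up a ar t. (if s \<in> Up a ar t' then 1 else 0))"
    unfolding s1 using Ucoef_single[OF g] Ucoef_single[OF g'] by (intro sum.cong) auto
  also have "\<dots> = int (card (Up a ar t \<inter> Up a ar t'))" using finite_Up by (rule sum_ind)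
  finally have A: "(\<Sum>s\<in>{s. Ucoef {a} ar s t \<noteq> 0}. Ucoef {a} ar s t * Ucoef {a} ar s t') = int (card (Up a ar t \<inter> Up a ar t'))" .
  have s2: "{r. gtree {a} ar r \<and> Ucoef {a} ar t r \<noteq> 0} = Dn a ar t"
    unfolding Dn_def using Ucoef_single by (auto split: if_splits)
  have "(\<Sum>r\<in>{r. gtree {a} ar r \<and> Ucoef {a} ar t r \<noteq> 0}. Ucoef {a} ar t r * Ucoef {a} ar t' r)
      = (\<Sum>r\<in>Dn a ar t. (if r \<in> Dn a ar t' then 1 else 0))"
    unfolding s2 by (intro sum.cong) (auto simp: Ucoef_single Dn_def)
  also have "\<dots> = int (card (Dn a ar t \<inter> Dn a ar t'))" using finite_Dn[OF g] by (rule sum_ind)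
  finally show ?thesis using A unfolding commcoef_def by simp
qed

lemma commcoef_single_val:
  assumes g: "gtree {a} ar t" and g': "gtree {a} ar t'"
  shows "commcoef {a} ar t' t = (if t' = t then int (leaves t) - int (nmax t) else 0)"
proof (cases "t' = t")
  case True
  have "card (Dn a ar t) = card (paths ` Dn a ar t)"
    using inj_on_subset[OF inj_paths Dn_gtree] by (rule card_image[symmetric])
  also have "\<dots> = card (DnS (ar a) (paths t))" using paths_Dn[OF g] by simp
  also have "\<dots> = card (Mx (ar a) (paths t))" using card_DnS[OF gtree_valid[OF g]] .
  also have "\<dots> = nmax t" using card_Mx[OF g] .
  finally have D: "card (Dn a ar t) = nmax t" .
  have "commcoef {a} ar t' t = int (card (Up a ar t)) - int (card (Dn a ar t))"
    using True commcoef_single[OF g g] by simp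
  then show ?thesis using True D card_Up[OF g] by simp
next
  case False
  have ne: "paths t \<noteq> paths t'"
  proof
    assume "paths t = paths t'"
    then have "t = t'" by (rule paths_inj[OF g g'])
    then show False using False by simp
  qed
  have sub1: "Up a ar t \<inter> Up a ar t' \<subseteq> {t. gtree {a} ar t}" using Up_sub[OF g] by blast
  have sub2: "Dn a ar t \<inter> Dn a ar t' \<subseteq> {t. gtree {a} ar t}" using Dn_gtree by blast
  have "card (Up a ar t \<inter> Up a ar t') = card (paths ` (Up a ar t \<inter> Up a ar t'))"
    using inj_on_subset[OF inj_paths sub1] by (rule card_image[symmetric])
  also have "\<dots> = card (paths ` Up a ar t \<inter> paths ` Up a ar t')"
    using inj_on_image_Int[OF inj_paths Up_sub[OF g] Up_sub[OF g']] by simp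
  also have "\<dots> = card (UpS (ar a) (paths t) \<inter> UpS (ar a) (paths t'))"
    unfolding UpS_def paths_Up[OF g] paths_Up[OF g'] ..
  also have "\<dots> = card (DnS (ar a) (paths t) \<inter> DnS (ar a) (paths t'))"
    using card_Int_eq[OF gtree_valid[OF g] gtree_valid[OF g'] ne] .
  also have "\<dots> = card (paths ` Dn a ar t \<inter> paths ` Dn a ar t')"
    unfolding paths_Dn[OF g] paths_Dn[OF g'] ..
  also have "\<dots> = card (paths ` (Dn a ar t \<inter> Dn a ar t'))"
    using inj_on_image_Int[OF inj_paths Dn_gtree Dn_gtree] by simp
  also have "\<dots> = card (Dn a ar t \<inter> Dn a ar t')"
    using inj_on_subset[OF inj_paths sub2] by (rule card_image)
  finally have "card (Up a ar t \<inter> Up a ar t') = card (Dn a ar t \<inter> Dn a ar t')" .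
  then show ?thesis using False commcoef_single[OF g g'] by simp
qed

end

lemma degree_graft:
  "(i < leaves t \<longrightarrow> degree (graft ar t i c) = Suc (degree t))"
  "(i < sum_list (map leaves ts) \<longrightarrow> sum_list (map degree (graftl ar ts i c)) = Suc (sum_list (map degree ts)))"
  by (induction ar t i c and ar ts i c rule: graft_graftl.induct) auto

lemma Ucoef_nz: "Ucoef G ar s t \<noteq> 0 \<Longrightarrow> \<exists>c i. c \<in> G \<and> i < leaves t \<and> graft ar t i c = s"
proof -
  assume "Ucoef G ar s t \<noteq> 0"
  then have "{(c, i). c \<in> G \<and> i < leaves t \<and> graft ar t i c = s} \<noteq> {}"
    unfolding Ucoef_def by (metis card.empty of_nat_0)
  then obtain p where "p \<in> {(c, i). c \<in> G \<and> i < leaves t \<and> graft ar t i c = s}" by blast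
  then show ?thesis by (cases p) blast
qed

lemma Ucoef_root: "Ucoef G ar s (Node b ts) \<noteq> 0 \<Longrightarrow> \<exists>us. s = Node b us"
  using Ucoef_nz by fastforce

lemma counterexample:
  assumes "a \<in> G" "b \<in> G" "a \<noteq> b"
  shows "commcoef G ar (Node b (replicate (ar b) Leaf)) (Node a (replicate (ar a) Leaf)) = -1"
proof -
  define t where "t = Node a (replicate (ar a) Leaf)"
  define t' where "t' = Node b (replicate (ar b) Leaf)"
  have A0: "Ucoef G ar s t * Ucoef G ar s t' = 0" for s
  proof (cases "Ucoef G ar s t = 0")
    case True
    then show ?thesis by simp
  next
    case False
    then have "Ucoef G ar s (Node a (replicate (ar a) Leaf)) \<noteq> 0" unfolding t_def .
    then obtain us where us: "s = Node a us" using Ucoef_root by metis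
    have "Ucoef G ar s t' = 0"
    proof (rule ccontr)
      assume "Ucoef G ar s t' \<noteq> 0"
      then have "Ucoef G ar s (Node b (replicate (ar b) Leaf)) \<noteq> 0" unfolding t'_def .
      then obtain vs where "s = Node b vs" using Ucoef_root by metis
      then show False using us assms(3) by simp
    qed
    then show ?thesis by simp
  qed
  have A: "(\<Sum>s\<in>{s. Ucoef G ar s t \<noteq> 0}. Ucoef G ar s t * Ucoef G ar s t') = 0"
    by (rule sum.neutral) (use A0 in blast)
  have U1: "Ucoef G ar x Leaf = 1" if x: "x = Node d (replicate (ar d) Leaf)" and d: "d \<in> G" for x d
  proof -
    have "{(c, i). c \<in> G \<and> i < leaves Leaf \<and> graft ar Leaf i c = x} = {(d, 0)}"
    proof (rule set_eqI)
      fix p :: "'a \<times> nat"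
      obtain c i where p: "p = (c, i)" by (cases p)
      have "(c \<in> G \<and> i < leaves Leaf \<and> graft ar Leaf i c = x) \<longleftrightarrow> (c = d \<and> i = 0)"
      proof
        assume h: "c \<in> G \<and> i < leaves Leaf \<and> graft ar Leaf i c = x"
        then have "i = 0" by simp
        then have "Node c (replicate (ar c) Leaf) = Node d (replicate (ar d) Leaf)" using h x by simp
        then show "c = d \<and> i = 0" using \<open>i = 0\<close> by simp
      next
        assume "c = d \<and> i = 0"
        then show "c \<in> G \<and> i < leaves Leaf \<and> graft ar Leaf i c = x" using x d by simp
      qed
      then show "p \<in> {(c, i). c \<in> G \<and> i < leaves Leaf \<and> graft ar Leaf i c = x} \<longleftrightarrow> p \<in> {(d, 0)}"
        using p by simp
    qed
    then show ?thesis unfolding Ucoef_def by simp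
  qed
  have S: "{r. gtree G ar r \<and> Ucoef G ar t r \<noteq> 0} = {Leaf}"
  proof
    show "{r. gtree G ar r \<and> Ucoef G ar t r \<noteq> 0} \<subseteq> {Leaf}"
    proof
      fix r assume "r \<in> {r. gtree G ar r \<and> Ucoef G ar t r \<noteq> 0}"
      then have "Ucoef G ar t r \<noteq> 0" by simp
      then obtain c i where ci: "i < leaves r" "graft ar r i c = t" using Ucoef_nz by blast
      have "degree t = Suc (degree r)" using degree_graft(1)[of i r ar c] ci by simp
      moreover have "degree t = 1" unfolding t_def by simp
      ultimately have "degree r = 0" by simp
      then have "r = Leaf" by (cases r) simp_all
      then show "r \<in> {Leaf}" by simp
    qed
  next
    have "gtree G ar Leaf" by (rule gtree.intros)
    then show "{Leaf} \<subseteq> {r. gtree G ar r \<and> Ucoef G ar t r \<noteq> 0}"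
      using U1[OF t_def assms(1)] by simp
  qed
  have B: "(\<Sum>r\<in>{r. gtree G ar r \<and> Ucoef G ar t r \<noteq> 0}. Ucoef G ar t r * Ucoef G ar t' r) = 1"
    unfolding S using U1[OF t_def assms(1)] U1[OF t'_def assms(2)] by simp
  have "commcoef G ar t' t = 0 - 1" unfolding commcoef_def using A B by simp
  then show ?thesis unfolding t_def t'_def by simp
qed

theorem proposition2p1:
  fixes G :: "'a set" and ar :: "'a \<Rightarrow> nat"
  assumes "finite G" and "\<forall>a\<in>G. ar a \<ge> 1"
  shows "((\<exists>\<phi>. diag_self_dual G ar \<phi>) \<longleftrightarrow> (G = {} \<or> (\<exists>a. G = {a})))
       \<and> (\<forall>a \<phi> t. G = {a} \<longrightarrow> diag_self_dual G ar \<phi> \<longrightarrow> gtree G ar t \<longrightarrow>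
           \<phi> t = int (leaves t) - int (nmax t))"
proof (intro conjI allI impI iffI)
  assume "\<exists>\<phi>. diag_self_dual G ar \<phi>"
  then obtain \<phi> where d: "diag_self_dual G ar \<phi>" by blast
  show "G = {} \<or> (\<exists>a. G = {a})"
  proof (rule ccontr)
    assume "\<not> (G = {} \<or> (\<exists>a. G = {a}))"
    then obtain a b where ab: "a \<in> G" "b \<in> G" "a \<noteq> b" by blast
    define t where "t = Node a (replicate (ar a) Leaf)"
    define t' where "t' = Node b (replicate (ar b) Leaf)"
    have "gtree G ar t" "gtree G ar t'" unfolding t_def t'_def using ab by (auto intro!: gtree.intros)
    moreover have "t' \<noteq> t" using ab(3) unfolding t_def t'_def by simp
    ultimately have "commcoef G ar t' t = 0" using d unfolding diag_self_dual_def by presburger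
    then show False using counterexample[OF ab] unfolding t_def t'_def by simp
  qed
next
  assume "G = {} \<or> (\<exists>a. G = {a})"
  then show "\<exists>\<phi>. diag_self_dual G ar \<phi>"
  proof
    assume G: "G = {}"
    have "t = Leaf" if "gtree G ar t" for t using that G by (cases rule: gtree.cases) auto
    moreover have "commcoef G ar Leaf Leaf = 0" unfolding commcoef_def Ucoef_def G by simp
    ultimately have "diag_self_dual G ar (\<lambda>_. 0)" unfolding diag_self_dual_def by auto
    then show ?thesis by blast
  next
    assume "\<exists>a. G = {a}"
    then obtain a where G: "G = {a}" by blast
    have "diag_self_dual G ar (\<lambda>t. int (leaves t) - int (nmax t))"
      unfolding diag_self_dual_def G using commcoef_single_val[where a=a and ar=ar] by presburger
    then show ?thesis by blast
  qed
next
  fix a \<phi> t assume G: "G = {a}" and d: "diag_self_dual G ar \<phi>" and g: "gtree G ar t"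
  have "commcoef G ar t t = \<phi> t" using d g unfolding diag_self_dual_def by simp
  moreover have "commcoef G ar t t = int (leaves t) - int (nmax t)"
    using commcoef_single_val[of a ar t t] g G by simp
  ultimately show "\<phi> t = int (leaves t) - int (nmax t)" by simp
qed

end
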